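(* Let $i\geq 2$ be an integer and let $D$ be a strong digraph with $D\in\mathcal{LE}_i$. Then $D$ has an independent set of vertices that meets (shares a vertex with) every longest directed path of $D$.
   Context: All digraphs are finite, without loops or multiple arcs. Paths and cycles are directed; the length of a path or cycle is its number of arcs. A set of vertices is independent if no two distinct vertices of it are joined by an arc. A digraph is strong if for every ordered pair of vertices $x,y$ there is a directed path from $x$ to $y$. For a subdigraph $H$ of a digraph $D$, an ear of $H$ in $D$ is either a directed path in $D$ whose two end vertices lie in $H$ and whose internal vertices do not lie in $H$, or a directed cycle in $D$ having exactly one vertex in $H$. An ear decomposition of a strong digraph $D$ is a sequence $(D_0,D_1,\ldots,D_k)$ of strong subdigraphs of $D$ such that $D_0$ is a directed cycle, $D_{j+1}=D_j\cup P_j$ where $P_j$ is an ear of $D_j$ in $D$ for every $j\in\{0,\ldots,k-1\}$, and $D_k=D$. For an integer $i\geq 1$, $\mathcal{LE}_i$ denotes the family of strong digraphs having an ear decomposition in which every ear has length at least $i$. *)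

theory Defs
  imports Main
begin

definition digraph :: "'a set \<Rightarrow> ('a \<times> 'a) set \<Rightarrow> bool" where
  "digraph V A \<longleftrightarrow> finite V \<and> A \<subseteq> V \<times> V \<and> (\<forall>v. (v, v) \<notin> A)"

definition path_arcs :: "'a list \<Rightarrow> ('a \<times> 'a) set" where
  "path_arcs ps = set (zip ps (tl ps))"

definition cycle_arcs :: "'a list \<Rightarrow> ('a \<times> 'a) set" where
  "cycle_arcs ps = path_arcs ps \<union> {(last ps, hd ps)}"

text \<open>A directed path (vertices pairwise distinct); its length is length ps - 1.\<close>
definition is_path :: "'a set \<Rightarrow> ('a \<times> 'a) set \<Rightarrow> 'a list \<Rightarrow> bool" where
  "is_path V A ps \<longleftrightarrow> ps \<noteq> [] \<and> distinct ps \<and> set ps \<subseteq> V \<and> path_arcs ps \<subseteq> A"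

text \<open>A directed cycle v0 -> v1 -> ... -> v(k-1) -> v0; its length is k = length ps.\<close>
definition is_cycle :: "'a set \<Rightarrow> ('a \<times> 'a) set \<Rightarrow> 'a list \<Rightarrow> bool" where
  "is_cycle V A ps \<longleftrightarrow> length ps \<ge> 2 \<and> distinct ps \<and> set ps \<subseteq> V \<and> cycle_arcs ps \<subseteq> A"

definition strong :: "'a set \<Rightarrow> ('a \<times> 'a) set \<Rightarrow> bool" where
  "strong V A \<longleftrightarrow> (\<forall>x\<in>V. \<forall>y\<in>V. \<exists>p. is_path V A p \<and> hd p = x \<and> last p = y)"

definition subdigraph :: "'a set \<Rightarrow> ('a \<times> 'a) set \<Rightarrow> 'a set \<Rightarrow> ('a \<times> 'a) set \<Rightarrow> bool" where
  "subdigraph VH AH V A \<longleftrightarrow> VH \<subseteq> V \<and> AH \<subseteq> A \<and> AH \<subseteq> VH \<times> VH"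

text \<open>An ear is encoded as (ps, closed): closed = False means a path with vertex list ps,
  closed = True means a cycle with vertex list ps.\<close>
definition ear_verts :: "'a list \<times> bool \<Rightarrow> 'a set" where
  "ear_verts e = set (fst e)"

definition ear_arcs :: "'a list \<times> bool \<Rightarrow> ('a \<times> 'a) set" where
  "ear_arcs e = (if snd e then cycle_arcs (fst e) else path_arcs (fst e))"

definition ear_length :: "'a list \<times> bool \<Rightarrow> nat" where
  "ear_length e = (if snd e then length (fst e) else length (fst e) - 1)"

definition is_ear :: "'a set \<Rightarrow> ('a \<times> 'a) set \<Rightarrow> 'a set \<Rightarrow> 'a list \<times> bool \<Rightarrow> bool" where
  "is_ear V A VH e \<longleftrightarrow>
     (if snd e then is_cycle V A (fst e) \<and> card (set (fst e) \<inter> VH) = 1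
      else is_path V A (fst e) \<and> length (fst e) \<ge> 2 \<and> hd (fst e) \<in> VH \<and> last (fst e) \<in> VH
           \<and> (\<forall>k. 0 < k \<and> k < length (fst e) - 1 \<longrightarrow> fst e ! k \<notin> VH))"

text \<open>D = (V, A) belongs to LE_i: it has an ear decomposition (D_0, ..., D_k), given by the
  list Ds, with all ears of length at least i.\<close>
definition in_LE :: "nat \<Rightarrow> 'a set \<Rightarrow> ('a \<times> 'a) set \<Rightarrow> bool" where
  "in_LE i V A \<longleftrightarrow> strong V A \<and>
     (\<exists>Ds :: ('a set \<times> ('a \<times> 'a) set) list. Ds \<noteq> [] \<and>
        (\<forall>j < length Ds. subdigraph (fst (Ds ! j)) (snd (Ds ! j)) V A
                         \<and> strong (fst (Ds ! j)) (snd (Ds ! j))) \<and>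
        (\<exists>c. is_cycle V A c \<and> Ds ! 0 = (set c, cycle_arcs c)) \<and>
        (\<forall>j. Suc j < length Ds \<longrightarrow>
           (\<exists>e. is_ear V A (fst (Ds ! j)) e \<and> ear_length e \<ge> i \<and>
                Ds ! Suc j = (fst (Ds ! j) \<union> ear_verts e, snd (Ds ! j) \<union> ear_arcs e))) \<and>
        last Ds = (V, A))"

definition independent :: "('a \<times> 'a) set \<Rightarrow> 'a set \<Rightarrow> bool" where
  "independent A S \<longleftrightarrow> (\<forall>x\<in>S. \<forall>y\<in>S. x \<noteq> y \<longrightarrow> (x, y) \<notin> A)"

definition longest_path :: "'a set \<Rightarrow> ('a \<times> 'a) set \<Rightarrow> 'a list \<Rightarrow> bool" where
  "longest_path V A p \<longleftrightarrow> is_path V A p \<and> (\<forall>q. is_path V A q \<longrightarrow> length q \<le> length p)"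

end

theory Submission
  imports Defs
begin

lemma lp_path: "longest_path V A p \<Longrightarrow> is_path V A p" by (simp add: longest_path_def)
lemma lp_le: "longest_path V A p \<Longrightarrow> is_path V A q \<Longrightarrow> length q \<le> length p"
  by (simp add: longest_path_def)
lemma path_props: "is_path V A p \<Longrightarrow> p \<noteq> [] \<and> distinct p \<and> set p \<subseteq> V \<and> path_arcs p \<subseteq> A"
  by (simp add: is_path_def)

lemma path_arcs_nth:
  "(u,v) \<in> path_arcs w \<longleftrightarrow> (\<exists>i. Suc i < length w \<and> u = w!i \<and> v = w!Suc i)"
proof
  assume "(u,v) \<in> path_arcs w"
  then obtain i where "i < length w - 1" "u = w!i" "v = tl w ! i" by (auto simp: path_arcs_def set_zip)
  then show "\<exists>i. Suc i < length w \<and> u = w!i \<and> v = w!Suc i"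
    by (intro exI[of _ i]) (auto simp: nth_tl)
next
  assume "\<exists>i. Suc i < length w \<and> u = w!i \<and> v = w!Suc i"
  then obtain i where "Suc i < length w" "u = w!i" "v = w!Suc i" by blast
  then show "(u,v) \<in> path_arcs w"
    unfolding path_arcs_def set_zip by (auto simp: nth_tl intro!: exI[of _ i])
qed

lemma path_arcs_snoc: "xs \<noteq> [] \<Longrightarrow> path_arcs (xs @ [y]) = insert (last xs, y) (path_arcs xs)"
proof (induction xs)
  case Nil then show ?case by simp
next
  case (Cons a xs)
  then show ?case by (cases xs) (auto simp: path_arcs_def)
qed

lemma path_arcs_Cons: "xs \<noteq> [] \<Longrightarrow> path_arcs (y # xs) = insert (y, hd xs) (path_arcs xs)"
  by (cases xs) (auto simp: path_arcs_def)

lemma cycle_arcs_rotate1: "cycle_arcs (rotate1 c) = cycle_arcs c"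
proof (cases c)
  case Nil then show ?thesis by simp
next
  case (Cons x xs)
  show ?thesis
  proof (cases "xs = []")
    case True then show ?thesis using Cons by simp
  next
    case False
    then show ?thesis using Cons
      by (auto simp: cycle_arcs_def path_arcs_snoc path_arcs_Cons)
  qed
qed

lemma cycle_arcs_rotate: "cycle_arcs (rotate n c) = cycle_arcs c"
  by (induction n) (auto simp: cycle_arcs_rotate1)

lemma longest_fwd:
  assumes "longest_path V A P" "x \<in> set P" "(x,y) \<in> A" "y \<in> V" "\<forall>z. (x,z) \<in> A \<longrightarrow> z = y"
  shows "y \<in> set P"
proof -
  from assms(2) obtain p where p: "p < length P" "P!p = x" by (auto simp: in_set_conv_nth)
  have P: "P \<noteq> []" "distinct P" "set P \<subseteq> V" "path_arcs P \<subseteq> A"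
    using path_props[OF lp_path[OF assms(1)]] by auto
  show ?thesis
  proof (cases "Suc p < length P")
    case True
    then have "(P!p, P!Suc p) \<in> path_arcs P" unfolding path_arcs_nth by blast
    then have "(P!p, P!Suc p) \<in> A" using P(4) by (rule subsetD[rotated])
    then have "P!Suc p = y" using assms(5) p by blast
    then show ?thesis using True nth_mem by metis
  next
    case False
    then have "p = length P - 1" using p by simp
    then have "x = last P" using p P(1) by (simp add: last_conv_nth)
    show ?thesis
    proof (rule ccontr)
      assume "y \<notin> set P"
      then have "is_path V A (P @ [y])"
        using P assms(3,4) \<open>x = last P\<close> by (auto simp: is_path_def path_arcs_snoc)
      then show False using lp_le[OF assms(1), of "P @ [y]"] by simp
    qed
  qed
qed

lemma longest_bwd:
  assumes "longest_path V A P" "x \<in> set P" "(y,x) \<in> A" "y \<in> V" "\<forall>z. (z,x) \<in> A \<longrightarrow> z = y"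
  shows "y \<in> set P"
proof -
  from assms(2) obtain p where p: "p < length P" "P!p = x" by (auto simp: in_set_conv_nth)
  have P: "P \<noteq> []" "distinct P" "set P \<subseteq> V" "path_arcs P \<subseteq> A"
    using path_props[OF lp_path[OF assms(1)]] by auto
  show ?thesis
  proof (cases p)
    case (Suc q)
    have "(P!q, P!Suc q) \<in> path_arcs P" using p Suc unfolding path_arcs_nth by blast
    then have "(P!q, P!Suc q) \<in> A" using P(4) by (rule subsetD[rotated])
    then have "P!q = y" using assms(5) p Suc by blast
    then show ?thesis using p Suc nth_mem by (metis Suc_lessD)
  next
    case 0
    then have "x = hd P" using p P(1) by (simp add: hd_conv_nth)
    show ?thesis
    proof (rule ccontr)
      assume "y \<notin> set P"
      then have "is_path V A (y # P)"
        using P assms(3,4) \<open>x = hd P\<close> by (auto simp: is_path_def path_arcs_Cons)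
      then show False using lp_le[OF assms(1), of "y # P"] by simp
    qed
  qed
qed

lemma ear_walk:
  assumes "is_ear V A VH e" "ear_length e \<ge> 2"
  shows "\<exists>w. length w \<ge> 3 \<and> set w = ear_verts e \<and> path_arcs w = ear_arcs e \<and> hd w \<in> VH
     \<and> last w \<in> VH \<and> (\<forall>k. 0 < k \<and> k < length w - 1 \<longrightarrow> w!k \<notin> VH) \<and> distinct (butlast w)"
proof (cases "snd e")
  case False
  have *: "is_path V A (fst e)" "hd (fst e) \<in> VH" "last (fst e) \<in> VH"
    "\<forall>k. 0<k \<and> k<length (fst e) - 1 \<longrightarrow> fst e ! k \<notin> VH"
    using assms(1) False unfolding is_ear_def by simp_all
  have l: "length (fst e) \<ge> 3" using assms(2) False unfolding ear_length_def by simp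
  have d: "distinct (butlast (fst e))" using *(1) distinct_butlast unfolding is_path_def by blast
  have s: "set (fst e) = ear_verts e" "path_arcs (fst e) = ear_arcs e"
    using False by (simp_all add: ear_verts_def ear_arcs_def)
  show ?thesis apply (rule exI[of _ "fst e"]) using * l d s by simp
next
  case True
  define c where "c = fst e"
  have c: "length c \<ge> 2" "distinct c" "card (set c \<inter> VH) = 1"
    using assms True by (auto simp: is_ear_def is_cycle_def c_def)
  then obtain v where v: "set c \<inter> VH = {v}" by (auto simp: card_Suc_eq)
  then have "v \<in> set c" by auto
  then obtain r where r: "r < length c" "c!r = v" by (auto simp: in_set_conv_nth)
  define c' where "c' = rotate r c"
  have c'ne: "c' \<noteq> []" using c by (auto simp: c'_def)
  have hdc': "hd c' = v" using r c by (subst c'_def, subst hd_rotate_conv_nth) auto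
  have c'd: "distinct c'" "set c' = set c" "length c' = length c" using c by (auto simp: c'_def)
  define w where "w = c' @ [hd c']"
  have "path_arcs w = cycle_arcs c'"
    using c'ne by (simp add: w_def path_arcs_snoc cycle_arcs_def)
  also have "\<dots> = cycle_arcs c" by (simp add: c'_def cycle_arcs_rotate)
  finally have pa: "path_arcs w = ear_arcs e" using True by (simp add: ear_arcs_def c_def)
  have inter: "w!k \<notin> VH" if "0 < k" "k < length w - 1" for k
  proof -
    have k: "k < length c'" using that by (simp add: w_def)
    then have wk: "w!k = c'!k" by (simp add: w_def nth_append)
    have "c'!k \<noteq> c'!0" using nth_eq_iff_index_eq[OF c'd(1) k, of 0] k that c'ne by simp
    then have "c'!k \<noteq> v" using hdc' c'ne by (simp add: hd_conv_nth)
    moreover have "c'!k \<in> set c" using k c'd(2) nth_mem by metis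
    ultimately show ?thesis using v wk by auto
  qed
  have vV: "v \<in> VH" using v by auto
  have l: "length w \<ge> 3" using c c'd by (simp add: w_def)
  have s: "set w = ear_verts e" using c'd c'ne by (auto simp: w_def ear_verts_def c_def)
  have h: "hd w \<in> VH" using c'ne hdc' vV by (simp add: w_def)
  have la: "last w \<in> VH" using hdc' vV by (simp add: w_def)
  have d: "distinct (butlast w)" using c'd by (simp add: w_def)
  show ?thesis apply (rule exI[of _ w]) using l s pa h la d inter by simp
qed

lemma step:
  assumes AjV: "Aj \<subseteq> Vj \<times> Vj"
    and wl: "length w \<ge> 3" and wh: "hd w \<in> Vj" and wla: "last w \<in> Vj"
    and wi: "\<forall>k. 0 < k \<and> k < length w - 1 \<longrightarrow> w!k \<notin> Vj"
    and wd: "distinct (butlast w)"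
    and SV: "S \<subseteq> Vj" and Si: "independent Aj S"
    and SP: "\<forall>p. longest_path Vj Aj p \<longrightarrow> set p \<inter> S \<noteq> {}"
  shows "\<exists>S'\<subseteq> Vj \<union> set w. independent (Aj \<union> path_arcs w) S' \<and>
     (\<forall>p. longest_path (Vj \<union> set w) (Aj \<union> path_arcs w) p \<longrightarrow> set p \<inter> S' \<noteq> {})"
proof -
  define n where "n = length w - 1"
  define V' where "V' = Vj \<union> set w"
  define A' where "A' = Aj \<union> path_arcs w"
  have n2: "n \<ge> 2" and lw: "length w = Suc n" using wl by (auto simp: n_def)
  have w0: "w!0 \<in> Vj" using wh wl hd_conv_nth[of w] by (cases "w = []") auto
  have wn: "w!n \<in> Vj" using wla wl last_conv_nth[of w] by (cases "w = []") (auto simp: n_def)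
  have wI: "w!k \<notin> Vj" if "0 < k" "k < n" for k using wi that by (simp add: n_def)
  have bl: "butlast w ! k = w ! k" if "k < n" for k using that by (simp add: n_def nth_butlast)
  have inj: "i = k" if "i < n" "k < n" "w!i = w!k" for i k
    using that wd bl[of i] bl[of k] nth_eq_iff_index_eq[OF wd, of i k] by (simp add: n_def)
  have F1: "z = w!Suc k" if "0 < k" "k < n" "(w!k, z) \<in> A'" for k z
  proof -
    have "(w!k, z) \<notin> Aj" using AjV wI[OF that(1,2)] by auto
    then have "(w!k, z) \<in> path_arcs w" using that(3) by (simp add: A'_def)
    then obtain i where i: "Suc i < length w" "w!k = w!i" "z = w!Suc i" by (auto simp: path_arcs_nth)
    have "i \<noteq> 0" using i(2) w0 wI[OF that(1,2)] by (cases i) auto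
    then have "i < n" using i(1) lw by simp
    then have "i = k" using inj that i by metis
    then show ?thesis using i by simp
  qed
  have F2: "z = w!(k - 1)" if "0 < k" "k < n" "(z, w!k) \<in> A'" for k z
  proof -
    have "(z, w!k) \<notin> Aj" using AjV wI[OF that(1,2)] by auto
    then have "(z, w!k) \<in> path_arcs w" using that(3) by (simp add: A'_def)
    then obtain i where i: "Suc i < length w" "z = w!i" "w!k = w!Suc i" by (auto simp: path_arcs_nth)
    have "Suc i \<noteq> n" using i(3) wn wI[OF that(1,2)] by (cases "Suc i = n") auto
    then have "Suc i < n" using i(1) lw by simp
    then have "Suc i = k" using inj that i by metis
    then show ?thesis using i by (metis diff_Suc_1)
  qed
  have F3: "(w!k, w!Suc k) \<in> A'" if "k < n" for k
    using that lw by (auto simp: A'_def path_arcs_nth)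
  have wV: "w!k \<in> V'" if "k \<le> n" for k using that lw by (simp add: V'_def)
  have F4: "u \<notin> Vj \<or> v \<notin> Vj" if uvw: "(u,v) \<in> path_arcs w" for u v
  proof -
    obtain i where i: "Suc i < length w" "u = w!i" "v = w!Suc i" using path_arcs_nth[THEN iffD1, OF uvw] by blast
    show ?thesis
    proof (cases "i = 0")
      case True
      then have "Suc i < n" using n2 by simp
      then show ?thesis using wI[of "Suc i"] i by simp
    next
      case False
      then show ?thesis using wI[of i] i lw by simp
    qed
  qed
  have F5: "\<exists>k. 0 < k \<and> k < n \<and> w!k = x" if "x \<in> set w" "x \<notin> Vj" for x
  proof -
    from that(1) obtain k where k: "k < length w" "w!k = x" by (auto simp: in_set_conv_nth)
    have "k \<noteq> 0" using k w0 that(2) by (cases k) auto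
    moreover have "k \<noteq> n" using k wn that(2) by (cases "k = n") auto
    ultimately show ?thesis using k lw by (intro exI[of _ k]) simp
  qed
  have prp: "\<forall>j\<le>n. w!j \<in> set P" if P: "longest_path V' A' P" and k: "0 < k" "k < n" "w!k \<in> set P" for P k
  proof -
    have fw: "w!(k+d) \<in> set P" if "k + d \<le> n" for d
      using that
    proof (induction d)
      case 0 then show ?case using k by simp
    next
      case (Suc d)
      have "w!(k+d) \<in> set P" using Suc by simp
      moreover have "0 < k + d" "k + d < n" using Suc k by auto
      ultimately show ?case
        using longest_fwd[OF P, of "w!(k+d)" "w!Suc (k+d)"] F3 wV F1 Suc by simp
    qed
    have bw: "w!(k-d) \<in> set P" if "d \<le> k" for d
      using that
    proof (induction d)
      case 0 then show ?case using k by simp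
    next
      case (Suc d)
      have x: "w!(k-d) \<in> set P" using Suc by simp
      have h1: "0 < k - d" "k - d < n" using Suc k by auto
      have h2: "k - Suc d = (k - d) - 1" by simp
      have h3: "Suc (k - Suc d) = k - d" using Suc by simp
      have a: "(w!(k - Suc d), w!(k-d)) \<in> A'" using F3[of "k - Suc d"] h1 h3 by simp
      have b: "w!(k - Suc d) \<in> V'" using wV[of "k - Suc d"] h1 by simp
      have c: "\<forall>z. (z, w!(k-d)) \<in> A' \<longrightarrow> z = w!(k - Suc d)"
        using F2[of "k-d"] h1 h2 by metis
      show ?case using longest_bwd[OF P x a b c] .
    qed
    show ?thesis
    proof (intro allI impI)
      fix j assume "j \<le> n"
      show "w!j \<in> set P"
      proof (cases "j \<le> k")
        case True then show ?thesis using bw[of "k - j"] by simp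
      next
        case False then show ?thesis using fw[of "j - k"] \<open>j \<le> n\<close> by simp
      qed
    qed
  qed
  have allw: "set w \<subseteq> set P" if "longest_path V' A' P" "0 < k" "k < n" "w!k \<in> set P" for P k
  proof
    fix x assume "x \<in> set w"
    then obtain j where "j < length w" "w!j = x" by (auto simp: in_set_conv_nth)
    then show "x \<in> set P" using prp[OF that] lw by auto
  qed
  have indep0: "(u, v) \<notin> A'" if "u \<in> S" "v \<in> S" "u \<noteq> v" for u v
    using that Si SV F4 unfolding A'_def independent_def by blast
  define S' where "S' = (if set w \<inter> S \<noteq> {} then S else insert (w!1) S)"
  have w1: "w!1 \<notin> Vj" using wI[of 1] n2 by simp
  have S'V: "S' \<subseteq> V'" using SV wV[of 1] n2 by (auto simp: S'_def V'_def)
  have S'i: "independent A' S'"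
  proof (cases "set w \<inter> S \<noteq> {}")
    case True then show ?thesis using indep0 by (auto simp: S'_def independent_def)
  next
    case False
    have a: "(w!1, s) \<notin> A'" "(s, w!1) \<notin> A'" if "s \<in> S" for s
    proof -
      have "s \<notin> set w" using False that by auto
      moreover have "s \<in> Vj" using that SV by auto
      ultimately show "(w!1, s) \<notin> A'" "(s, w!1) \<notin> A'"
        using w1 AjV unfolding A'_def by (auto simp: path_arcs_nth)
    qed
    show ?thesis using False indep0 a by (auto simp: S'_def independent_def)
  qed
  have S'P: "set P \<inter> S' \<noteq> {}" if P: "longest_path V' A' P" for P
  proof (cases "\<exists>k. 0 < k \<and> k < n \<and> w!k \<in> set P")
    case True
    then obtain k where k: "0 < k" "k < n" "w!k \<in> set P" by blast
    have sub: "set w \<subseteq> set P" using allw[OF P k] .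
    show ?thesis
    proof (cases "set w \<inter> S \<noteq> {}")
      case True then show ?thesis using sub by (auto simp: S'_def)
    next
      case False
      have "w!1 \<in> set w" using lw n2 by simp
      then show ?thesis using False sub by (auto simp: S'_def)
    qed
  next
    case False
    have PV: "set P \<subseteq> Vj"
    proof
      fix x assume x: "x \<in> set P"
      have "x \<in> V'" using path_props[OF lp_path[OF P]] x by auto
      show "x \<in> Vj"
      proof (rule ccontr)
        assume "x \<notin> Vj"
        then have "x \<in> set w" using \<open>x \<in> V'\<close> by (simp add: V'_def)
        then show False using F5 \<open>x \<notin> Vj\<close> False x by blast
      qed
    qed
    have PA: "path_arcs P \<subseteq> Aj"
    proof
      fix a assume a: "a \<in> path_arcs P"
      obtain u v where uv: "a = (u,v)" by force
      have uvP: "(u,v) \<in> path_arcs P" using a uv by simp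
      obtain j where j: "Suc j < length P" "u = P!j" "v = P!Suc j"
        using path_arcs_nth[THEN iffD1, OF uvP] by blast
      have "u \<in> set P" "v \<in> set P" using j by auto
      then have "u \<in> Vj" "v \<in> Vj" using PV by auto
      moreover have "a \<in> A'" using path_props[OF lp_path[OF P]] a by auto
      ultimately show "a \<in> Aj" using F4 uv unfolding A'_def by blast
    qed
    have "longest_path Vj Aj P"
      unfolding longest_path_def
    proof (intro conjI allI impI)
      show "is_path Vj Aj P" using path_props[OF lp_path[OF P]] PV PA by (simp add: is_path_def)
    next
      fix q assume "is_path Vj Aj q"
      then have "is_path V' A' q" by (auto simp: is_path_def V'_def A'_def)
      then show "length q \<le> length P" using lp_le[OF P] by simp
    qed
    then have "set P \<inter> S \<noteq> {}" using SP by blast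
    then show ?thesis by (auto simp: S'_def)
  qed
  show ?thesis using S'V S'i S'P unfolding V'_def A'_def by blast
qed

lemma base:
  assumes "is_cycle V A c"
  shows "\<exists>S \<subseteq> set c. independent (cycle_arcs c) S \<and>
    (\<forall>p. longest_path (set c) (cycle_arcs c) p \<longrightarrow> set p \<inter> S \<noteq> {})"
proof -
  have c: "c \<noteq> []" "distinct c" using assms by (auto simp: is_cycle_def)
  have cp: "is_path (set c) (cycle_arcs c) c" using c by (auto simp: is_path_def cycle_arcs_def)
  have "set p \<inter> {hd c} \<noteq> {}" if p: "longest_path (set c) (cycle_arcs c) p" for p
  proof -
    have l: "length c \<le> length p" using lp_le[OF p cp] .
    have pp: "distinct p" "set p \<subseteq> set c" using path_props[OF lp_path[OF p]] by simp_all
    have "card (set c) \<le> card (set p)" using l pp c by (simp add: distinct_card)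
    then have "set p = set c" using pp card_subset_eq[of "set c" "set p"] card_mono[of "set c" "set p"]
      by simp
    then show ?thesis using c by simp
  qed
  moreover have "independent (cycle_arcs c) {hd c}" by (simp add: independent_def)
  moreover have "{hd c} \<subseteq> set c" using c by simp
  ultimately show ?thesis by blast
qed

theorem mainTheorem2:
  fixes V :: "'a set" and A :: "('a \<times> 'a) set" and i :: nat
  assumes "i \<ge> 2"
    and "digraph V A"
    and "strong V A"
    and "in_LE i V A"
  shows "\<exists>S \<subseteq> V. independent A S \<and> (\<forall>p. longest_path V A p \<longrightarrow> set p \<inter> S \<noteq> {})"
proof -
  from assms(4)[unfolded in_LE_def, THEN conjunct2] obtain Ds :: "('a set \<times> ('a \<times> 'a) set) list"
    where D: "Ds \<noteq> [] \<and>
        (\<forall>j < length Ds. subdigraph (fst (Ds ! j)) (snd (Ds ! j)) V A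
                         \<and> strong (fst (Ds ! j)) (snd (Ds ! j))) \<and>
        (\<exists>c. is_cycle V A c \<and> Ds ! 0 = (set c, cycle_arcs c)) \<and>
        (\<forall>j. Suc j < length Ds \<longrightarrow>
           (\<exists>e. is_ear V A (fst (Ds ! j)) e \<and> ear_length e \<ge> i \<and>
                Ds ! Suc j = (fst (Ds ! j) \<union> ear_verts e, snd (Ds ! j) \<union> ear_arcs e))) \<and>
        last Ds = (V, A)" ..
  note Ds = D[THEN conjunct1] D[THEN conjunct2, THEN conjunct1]
    D[THEN conjunct2, THEN conjunct2, THEN conjunct1]
    D[THEN conjunct2, THEN conjunct2, THEN conjunct2, THEN conjunct1]
    D[THEN conjunct2, THEN conjunct2, THEN conjunct2, THEN conjunct2]
  have main: "\<exists>S \<subseteq> fst (Ds!j). independent (snd (Ds!j)) S \<and>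
      (\<forall>p. longest_path (fst (Ds!j)) (snd (Ds!j)) p \<longrightarrow> set p \<inter> S \<noteq> {})" if "j < length Ds" for j
    using that
  proof (induction j)
    case 0
    from Ds(3) obtain c where c: "is_cycle V A c \<and> Ds ! 0 = (set c, cycle_arcs c)" ..
    then show ?case using base[of V A c] by simp
  next
    case (Suc j)
    have jl: "j < length Ds" using Suc.prems by simp
    from Suc.IH[OF jl] obtain S where S: "S \<subseteq> fst (Ds!j)" "independent (snd (Ds!j)) S"
      "\<forall>p. longest_path (fst (Ds!j)) (snd (Ds!j)) p \<longrightarrow> set p \<inter> S \<noteq> {}"
      by (elim exE conjE) (rule that; assumption)
    from Ds(4)[rule_format, OF Suc.prems] obtain e where
      e0: "is_ear V A (fst (Ds ! j)) e \<and> ear_length e \<ge> i \<and>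
       Ds ! Suc j = (fst (Ds ! j) \<union> ear_verts e, snd (Ds ! j) \<union> ear_arcs e)" ..
    note e = e0[THEN conjunct1] e0[THEN conjunct2, THEN conjunct1] e0[THEN conjunct2, THEN conjunct2]
    have "ear_length e \<ge> 2" using e(2) assms(1) by simp
    from ear_walk[OF e(1) this] obtain w where w: "length w \<ge> 3" "set w = ear_verts e" "path_arcs w = ear_arcs e"
      "hd w \<in> fst (Ds!j)" "last w \<in> fst (Ds!j)"
      "\<forall>k. 0 < k \<and> k < length w - 1 \<longrightarrow> w!k \<notin> fst (Ds!j)" "distinct (butlast w)"
      by (elim exE conjE) (rule that; assumption)
    have sub: "snd (Ds!j) \<subseteq> fst (Ds!j) \<times> fst (Ds!j)"
      using Ds(2) jl unfolding subdigraph_def by blast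
    show ?case using step[OF sub w(1) w(4) w(5) w(6) w(7) S(1) S(2) S(3)] e(3) w(2) w(3)
      by simp
  qed
  have "length Ds - 1 < length Ds" using Ds(1) by simp
  moreover have "Ds ! (length Ds - 1) = (V, A)" using Ds(1) Ds(5) by (simp add: last_conv_nth)
  ultimately show ?thesis using main[of "length Ds - 1"] by simp
qed

end
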